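(* Let $p\in(0,1)$ and $q=-\log(1-p)$. For rectangles $R\subseteq R'$ with $\dim(R)=(a,b)$ and $\dim(R')=(a+s,b+t)$, $$ \mathbb{P}_p\big[D(R,R')\big]\le \exp\Big(-s\,g(bq)-t\,g(aq)+2[g(bq)+g(aq)]+st\,q\,e^{2[g(bq)+g(aq)]}\Big). $$
   Context: Under $\mathbb{P}_p$, the initial configuration $\sigma$ assigns independent states to sites of $\mathbb{Z}^2$: the origin is active with probability $p$, else empty; every other site is occupied with probability $p$, else empty. A rectangle is $\{a,\dots,c\}\times\{b,\dots,d\}\subset\mathbb{Z}^2$ with dimensions $(c-a+1,d-b+1)$; columns are $\{x\}\times\{b,\dots,d\}$ and rows $\{a,\dots,c\}\times\{y\}$. A rectangle has a double gap in the columns (resp. rows) if two consecutive columns (resp. rows) consist entirely of empty sites in $\sigma$. For $R=\{x_1,\dots,x_2\}\times\{y_1,\dots,y_2\}\subseteq R'=\{X_1,\dots,X_2\}\times\{Y_1,\dots,Y_2\}$, $D(R,R')$ is the event that each of the (possibly empty) rectangles $\{X_1,\dots,x_1-1\}\times\{Y_1,\dots,Y_2\}$ and $\{x_2+1,\dots,X_2\}\times\{Y_1,\dots,Y_2\}$ has no double gap in the columns, and each of $\{X_1,\dots,X_2\}\times\{Y_1,\dots,y_1-1\}$ and $\{X_1,\dots,X_2\}\times\{y_2+1,\dots,Y_2\}$ has no double gap in the rows. Also $\beta(u)=\frac{u+\sqrt{u(4-3u)}}{2}$ and $g(z)=-\log\beta(1-e^{-z})$ for $z>0$. *)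

theory Defs
  imports "HOL-Probability.Probability"
begin

datatype site_state = Empty | Occupied | Active

type_synonym config = "int \<times> int \<Rightarrow> site_state"

definition site_law :: "real \<Rightarrow> int \<times> int \<Rightarrow> site_state measure" where
  "site_law p v = measure_pmf (map_pmf
     (\<lambda>b. if b then (if v = (0,0) then Active else Occupied) else Empty) (bernoulli_pmf p))"

definition P :: "real \<Rightarrow> config measure" where
  "P p = PiM (UNIV :: (int \<times> int) set) (site_law p)"

definition double_gap_cols :: "config \<Rightarrow> int \<Rightarrow> int \<Rightarrow> int \<Rightarrow> int \<Rightarrow> bool" where
  "double_gap_cols \<sigma> a c b d \<longleftrightarrow>
     (\<exists>x. a \<le> x \<and> x + 1 \<le> c \<and> (\<forall>y\<in>{b..d}. \<sigma> (x,y) = Empty \<and> \<sigma> (x+1,y) = Empty))"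

definition double_gap_rows :: "config \<Rightarrow> int \<Rightarrow> int \<Rightarrow> int \<Rightarrow> int \<Rightarrow> bool" where
  "double_gap_rows \<sigma> a c b d \<longleftrightarrow>
     (\<exists>y. b \<le> y \<and> y + 1 \<le> d \<and> (\<forall>x\<in>{a..c}. \<sigma> (x,y) = Empty \<and> \<sigma> (x,y+1) = Empty))"

text \<open>Event D(R,R') for R = {x1..x2} x {y1..y2} and R' = {X1..X2} x {Y1..Y2}.\<close>
definition D_event :: "int \<Rightarrow> int \<Rightarrow> int \<Rightarrow> int \<Rightarrow> int \<Rightarrow> int \<Rightarrow> int \<Rightarrow> int \<Rightarrow> config \<Rightarrow> bool" where
  "D_event x1 x2 y1 y2 X1 X2 Y1 Y2 \<sigma> \<longleftrightarrow>
     \<not> double_gap_cols \<sigma> X1 (x1 - 1) Y1 Y2 \<and>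
     \<not> double_gap_cols \<sigma> (x2 + 1) X2 Y1 Y2 \<and>
     \<not> double_gap_rows \<sigma> X1 X2 Y1 (y1 - 1) \<and>
     \<not> double_gap_rows \<sigma> X1 X2 (y2 + 1) Y2"

definition beta :: "real \<Rightarrow> real" where
  "beta u = (u + sqrt (u * (4 - 3 * u))) / 2"

definition g :: "real \<Rightarrow> real" where
  "g z = - ln (beta (1 - exp (- z)))"

end

theory Submission
  imports Defs
begin

lemma site_state_UNIV: "(UNIV :: site_state set) = {Empty, Occupied, Active}"
  by (auto intro: site_state.exhaust)

lemma finite_site_state[simp]: "finite (UNIV :: site_state set)"
  by (simp add: site_state_UNIV)

lemma sets_site_law[simp]: "sets (site_law p v) = UNIV"
  by (simp add: site_law_def)

lemma space_site_law[simp]: "space (site_law p v) = UNIV"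
  by (simp add: site_law_def)

lemma prob_space_site_law: "prob_space (site_law p v)"
  by (simp add: site_law_def prob_space_measure_pmf)

lemma pps: "product_prob_space (site_law p)"
  unfolding product_prob_space_def product_prob_space_axioms_def product_sigma_finite_def
  using prob_space_site_law prob_space_imp_sigma_finite by blast

lemma emeasure_site_Empty:
  assumes "0 \<le> p" "p \<le> 1"
  shows "emeasure (site_law p v) {Empty} = ennreal (1 - p)"
proof -
  have "emeasure (site_law p v) {Empty} = emeasure (measure_pmf (bernoulli_pmf p))
     ((\<lambda>b. if b then (if v = (0,0) then Active else Occupied) else Empty) -` {Empty})"
    unfolding site_law_def by (simp add: emeasure_map_pmf)
  also have "((\<lambda>b. if b then (if v = (0,0) then Active else Occupied) else Empty) -` {Empty}) = {False}"
    by auto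
  also have "emeasure (measure_pmf (bernoulli_pmf p)) {False} = ennreal (1 - p)"
    using assms by (simp add: emeasure_pmf_single)
  finally show ?thesis .
qed

lemma space_PiM_site: "space (PiM I (site_law p)) = PiE I (\<lambda>_. UNIV)"
  by (simp add: space_PiM)

lemma sets_PiM_site_all:
  assumes "finite I" "A \<subseteq> space (PiM I (site_law p))"
  shows "A \<in> sets (PiM I (site_law p))"
proof -
  have fin: "finite A"
    using assms by (metis finite_PiE finite_site_state finite_subset space_PiM_site)
  have "A = (\<Union>f\<in>A. PiE I (\<lambda>i. {f i}))"
  proof
    show "A \<subseteq> (\<Union>f\<in>A. PiE I (\<lambda>i. {f i}))"
      using assms(2) by (auto simp: space_PiM_site PiE_iff)
    show "(\<Union>f\<in>A. PiE I (\<lambda>i. {f i})) \<subseteq> A"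
    proof clarify
      fix f g assume f: "f \<in> A" and g: "g \<in> PiE I (\<lambda>i. {f i})"
      have "f \<in> PiE I (\<lambda>_. UNIV)" using f assms(2) by (auto simp: space_PiM_site)
      then have "g = f" using g by (auto simp: PiE_iff extensional_def fun_eq_iff)
      then show "g \<in> A" using f by simp
    qed
  qed
  also have "\<dots> \<in> sets (PiM I (site_law p))"
    using fin assms(1) by (intro sets.finite_UN) (auto intro!: sets_PiM_I_finite)
  finally show ?thesis .
qed

lemma meas_site:
  assumes "finite I"
  shows "f \<in> borel_measurable (PiM I (site_law p))"
  by (rule measurableI) (auto intro!: sets_PiM_site_all[OF assms])


lemma prob_PiM_site: "prob_space (PiM I (site_law p))"
  by (rule prob_space_PiM) (rule prob_space_site_law)

lemma step:
  assumes W: "finite W" and U: "finite U" and WU: "W \<inter> U = {}"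
    and C: "\<And>w. w \<in> space (PiM W (site_law p)) \<Longrightarrow>
       (\<integral>\<^sup>+x. F (merge W U (w,x)) \<partial>PiM U (site_law p)) \<le> C w"
  shows "(\<integral>\<^sup>+\<sigma>. F \<sigma> \<partial>PiM (W \<union> U) (site_law p)) \<le> (\<integral>\<^sup>+w. C w \<partial>PiM W (site_law p))"
proof -
  interpret product_prob_space "site_law p" by (rule pps)
  have "(\<integral>\<^sup>+\<sigma>. F \<sigma> \<partial>PiM (W \<union> U) (site_law p)) =
     (\<integral>\<^sup>+ w. (\<integral>\<^sup>+ x. F (merge W U (w, x)) \<partial>(PiM U (site_law p))) \<partial>(PiM W (site_law p)))"
    by (rule product_nn_integral_fold) (use W U WU in \<open>auto intro: meas_site\<close>)
  also have "\<dots> \<le> (\<integral>\<^sup>+w. C w \<partial>PiM W (site_law p))"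
    by (rule nn_integral_mono) (use C in auto)
  finally show ?thesis .
qed

definition allE :: "(int\<times>int) set \<Rightarrow> config \<Rightarrow> bool" where
  "allE S \<sigma> \<longleftrightarrow> (\<forall>v\<in>S. \<sigma> v = Empty)"

lemma emeasure_allE:
  assumes U: "finite U" and p: "0 \<le> p" "p \<le> 1"
  shows "emeasure (PiM U (site_law p)) {x\<in>space (PiM U (site_law p)). allE U x} = ennreal ((1-p)^card U)"
proof -
  interpret product_prob_space "site_law p" by (rule pps)
  have eq: "{x\<in>space (PiM U (site_law p)). allE U x} = PiE U (\<lambda>_. {Empty})"
    by (auto simp: space_PiM_site allE_def PiE_iff extensional_def)
  have "emeasure (PiM U (site_law p)) {x\<in>space (PiM U (site_law p)). allE U x}
      = (\<Prod>i\<in>U. emeasure (site_law p i) {Empty})"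
    unfolding eq by (rule emeasure_PiM[OF U]) simp
  also have "\<dots> = (\<Prod>i\<in>U. ennreal (1 - p))" using p by (simp add: emeasure_site_Empty)
  also have "\<dots> = ennreal ((1-p)^card U)" using p by (simp add: prod_ennreal ennreal_power)
  finally show ?thesis .
qed

lemma int2:
  assumes U: "finite U" and p: "0 \<le> p" "p \<le> 1" and c: "0 \<le> c1" "0 \<le> c2"
  shows "(\<integral>\<^sup>+x. ennreal (if allE U x then c2 else c1) \<partial>PiM U (site_law p))
     = ennreal (c1 * (1 - (1-p)^card U) + c2 * (1-p)^card U)"
proof -
  let ?M = "PiM U (site_law p)"
  interpret prob_space ?M by (rule prob_PiM_site)
  define A where "A = {x\<in>space ?M. allE U x}"
  have Asets: "A \<in> sets ?M" unfolding A_def by (rule sets_PiM_site_all[OF U]) auto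
  have mA: "measure ?M A = (1-p)^card U"
    using emeasure_allE[OF U p] p unfolding A_def[symmetric]
    by (simp add: emeasure_eq_measure)
  have mC: "measure ?M (space ?M - A) = 1 - (1-p)^card U"
    using prob_compl[OF Asets] mA by simp
  have "(\<integral>\<^sup>+x. ennreal (if allE U x then c2 else c1) \<partial>?M)
     = (\<integral>\<^sup>+x. ennreal c1 * indicator (space ?M - A) x + ennreal c2 * indicator A x \<partial>?M)"
    by (rule nn_integral_cong) (auto simp: A_def indicator_def)
  also have "\<dots> = ennreal c1 * emeasure ?M (space ?M - A) + ennreal c2 * emeasure ?M A"
    using Asets by (subst nn_integral_add) (auto simp: nn_integral_cmult_indicator)
  also have "\<dots> = ennreal (c1 * (1 - (1-p)^card U) + c2 * (1-p)^card U)"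
    using mA mC c p Asets
    by (simp add: emeasure_eq_measure ennreal_mult ennreal_plus[symmetric] power_le_one)
  finally show ?thesis .
qed


lemma beta_props:
  assumes "0 < u" "u \<le> 1"
  shows "0 < beta u" "u \<le> beta u" "beta u \<le> 1" "(beta u)^2 = u * beta u + u * (1 - u)"
proof -
  have nn: "0 \<le> u * (4 - 3 * u)" using assms by (intro mult_nonneg_nonneg) auto
  have s2: "(sqrt (u * (4 - 3 * u)))^2 = u * (4 - 3 * u)" using nn by simp
  have s0: "0 \<le> sqrt (u * (4 - 3 * u))" using nn by simp
  have su: "u \<le> sqrt (u * (4 - 3 * u))"
    using assms by (intro real_le_rsqrt) (simp add: power2_eq_square algebra_simps mult_left_mono)
  have s1: "sqrt (u * (4 - 3 * u)) \<le> 2 - u"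
  proof (rule real_le_lsqrt)
    have "(2-u)^2 - u*(4-3*u) = 4*(1-u)^2" by (simp add: power2_eq_square algebra_simps)
    moreover have "0 \<le> 4*(1-u)^2" by simp
    ultimately show "u * (4 - 3 * u) \<le> (2 - u)\<^sup>2" by linarith
  qed (use assms in auto)
  show "0 < beta u" using assms s0 unfolding beta_def by (intro divide_pos_pos add_pos_nonneg) auto
  show "u \<le> beta u" using su by (simp add: beta_def)
  show "beta u \<le> 1" using s1 by (simp add: beta_def)
  show "(beta u)^2 = u * beta u + u * (1 - u)"
  proof -
    define S where "S = sqrt (u * (4 - 3 * u))"
    have SS: "S^2 = u * (4 - 3 * u)" using s2 by (simp add: S_def)
    have "(beta u)^2 = (u^2 + 2*u*S + S^2)/4" unfolding beta_def S_def[symmetric]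
      by (simp add: power2_eq_square field_simps)
    also have "\<dots> = (u^2 + 2*u*S + u * (4 - 3 * u))/4" by (simp only: SS)
    also have "\<dots> = u * ((u + S)/2) + u * (1 - u)" by (simp add: power2_eq_square field_simps)
    finally show ?thesis unfolding beta_def S_def .
  qed
qed

definition chainE :: "(nat \<Rightarrow> (int\<times>int) set) \<Rightarrow> nat set \<Rightarrow> nat \<Rightarrow> config \<Rightarrow> bool" where
  "chainE U K n \<sigma> \<longleftrightarrow> (\<forall>c. c + 1 < n \<longrightarrow> c \<in> K \<longrightarrow> \<not> (allE (U c) \<sigma> \<and> allE (U (c+1)) \<sigma>))"

definition Wn :: "(nat \<Rightarrow> (int\<times>int) set) \<Rightarrow> nat \<Rightarrow> (int\<times>int) set" where
  "Wn U n = (\<Union>c<n. U c)"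

lemma allE_cong: "(\<And>v. v \<in> S \<Longrightarrow> \<sigma> v = \<sigma>' v) \<Longrightarrow> allE S \<sigma> = allE S \<sigma>'"
  by (simp add: allE_def)

lemma chainE_Suc: "chainE U K (Suc n) \<sigma> \<longleftrightarrow> chainE U K n \<sigma> \<and>
   \<not> (1 \<le> n \<and> n - 1 \<in> K \<and> allE (U (n-1)) \<sigma> \<and> allE (U n) \<sigma>)"
proof
  assume H: "chainE U K (Suc n) \<sigma>"
  then show "chainE U K n \<sigma> \<and> \<not> (1 \<le> n \<and> n - 1 \<in> K \<and> allE (U (n-1)) \<sigma> \<and> allE (U n) \<sigma>)"
  proof (intro conjI notI)
    show "chainE U K n \<sigma>" using H unfolding chainE_def by auto
  next
    assume "1 \<le> n \<and> n - 1 \<in> K \<and> allE (U (n-1)) \<sigma> \<and> allE (U n) \<sigma>"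
    moreover have "n - 1 + 1 = n" "n - 1 + 1 < Suc n" using calculation by auto
    ultimately show False using H unfolding chainE_def by metis
  qed
next
  assume H: "chainE U K n \<sigma> \<and> \<not> (1 \<le> n \<and> n - 1 \<in> K \<and> allE (U (n-1)) \<sigma> \<and> allE (U n) \<sigma>)"
  show "chainE U K (Suc n) \<sigma>" unfolding chainE_def
  proof (intro allI impI)
    fix c assume c: "c + 1 < Suc n" "c \<in> K"
    show "\<not> (allE (U c) \<sigma> \<and> allE (U (c + 1)) \<sigma>)"
    proof (cases "c + 1 < n")
      case True then show ?thesis using H c unfolding chainE_def by auto
    next
      case False then have "c = n - 1" "1 \<le> n" "c + 1 = n" using c by auto
      then show ?thesis using H c by auto
    qed
  qed
qed

lemma chainE_cong: "(\<And>c. c < n \<Longrightarrow> allE (U c) \<sigma> = allE (U c) \<sigma>') \<Longrightarrow> chainE U K n \<sigma> = chainE U K n \<sigma>'"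
  unfolding chainE_def by (metis add_lessD1)

lemma chain_bound:
  fixes U :: "nat \<Rightarrow> (int\<times>int) set" and K :: "nat set"
  assumes fin: "\<And>c. finite (U c)" and card: "\<And>c. card (U c) = m" and m: "1 \<le> m"
    and disj: "\<And>c c'. c \<noteq> c' \<Longrightarrow> U c \<inter> U c' = {}"
    and p: "0 < p" "p < 1"
  defines "u \<equiv> 1 - (1-p)^m"
  defines "Phi \<equiv> \<lambda>n \<sigma>. if chainE U K n \<sigma> then (if 1 \<le> n \<and> n - 1 \<in> K \<and> allE (U (n-1)) \<sigma>
       then u / beta u else 1) else (0::real)"
  shows "(\<integral>\<^sup>+\<sigma>. ennreal (Phi n \<sigma>) \<partial>PiM (Wn U n) (site_law p)) \<le> ennreal (beta u ^ card (K \<inter> {..<n}))"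
proof (induction n)
  case 0
  interpret prob_space "PiM (Wn U 0) (site_law p)" by (rule prob_PiM_site)
  have "Phi 0 \<sigma> = 1" for \<sigma> by (simp add: Phi_def chainE_def)
  then show ?case by (simp add: emeasure_space_1)
next
  case (Suc n)
  have r: "0 < (1-p)^m" "(1-p)^m < 1" using p m by (auto intro: power_less_one_iff[THEN iffD2])
  have u: "0 < u" "u \<le> 1" using r unfolding u_def by auto
  note bp = beta_props[OF u]
  define b where "b = beta u"
  have b: "0 < b" "u \<le> b" "b \<le> 1" "b^2 = u * b + u * (1 - u)" using bp unfolding b_def by auto
  have finW: "finite (Wn U n)" by (simp add: Wn_def fin)
  have dWU: "Wn U n \<inter> U n = {}"
  proof -
    have "U c \<inter> U n = {}" if "c < n" for c using disj[of c n] that by auto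
    then show ?thesis unfolding Wn_def by blast
  qed
  have WS: "Wn U (Suc n) = Wn U n \<union> U n" by (auto simp: Wn_def lessThan_Suc)
  have Phi_nn: "0 \<le> Phi k \<sigma>" for k \<sigma> using b u by (simp add: Phi_def b_def)
  define C where "C = (\<lambda>w. ennreal ((if n \<in> K then b else 1) * Phi n w))"
  have inner: "(\<integral>\<^sup>+x. ennreal (Phi (Suc n) (merge (Wn U n) (U n) (w,x))) \<partial>PiM (U n) (site_law p)) \<le> C w"
    if w: "w \<in> space (PiM (Wn U n) (site_law p))" for w
  proof -
    define A where "A = (1 \<le> n \<and> n - 1 \<in> K \<and> allE (U (n-1)) w)"
    define En where "En = chainE U K n w"
    define c1 where "c1 = (if En then 1 else (0::real))"
    define c2 where "c2 = (if En \<and> \<not> A then (if n \<in> K then u / b else 1) else (0::real))"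
    have mc: "Phi (Suc n) (merge (Wn U n) (U n) (w,x)) = (if allE (U n) x then c2 else c1)" for x
    proof -
      let ?s = "merge (Wn U n) (U n) (w,x)"
      have lt: "allE (U c) ?s = allE (U c) w" if "c < n" for c
        by (rule allE_cong) (use that in \<open>auto simp: merge_def Wn_def\<close>)
      have eqn: "allE (U n) ?s = allE (U n) x"
        by (rule allE_cong) (use dWU in \<open>auto simp: merge_def\<close>)
      have chn: "chainE U K n ?s = En" unfolding En_def by (rule chainE_cong) (use lt in auto)
      have ch: "chainE U K (Suc n) ?s = (En \<and> \<not> (A \<and> allE (U n) x))"
        unfolding chainE_Suc chn A_def eqn using lt[of "n-1"] by auto
      show ?thesis
        unfolding Phi_def ch c1_def c2_def eqn using eqn by (auto simp: b_def)
    qed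
    have c12: "0 \<le> c1" "0 \<le> c2" using u b by (auto simp: c1_def c2_def)
    have "(\<integral>\<^sup>+x. ennreal (Phi (Suc n) (merge (Wn U n) (U n) (w,x))) \<partial>PiM (U n) (site_law p))
       = ennreal (c1 * u + c2 * (1 - u))"
      unfolding mc using int2[of "U n" p c1 c2] fin p c12 card by (simp add: u_def)
    also have "\<dots> \<le> C w"
    proof -
      have PhiW: "Phi n w = (if En then (if A then u / b else 1) else 0)"
        by (simp add: Phi_def En_def A_def b_def)
      have key: "u + (1 - u) * (u / b) = b"
        using b by (simp add: field_simps power2_eq_square)
      have "c1 * u + c2 * (1 - u) \<le> (if n \<in> K then b else 1) * Phi n w"
        unfolding PhiW c1_def c2_def using b u key
        by (auto simp: field_simps)
      then show ?thesis unfolding C_def by (intro ennreal_leI)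
    qed
    finally show ?thesis .
  qed
  have "(\<integral>\<^sup>+\<sigma>. ennreal (Phi (Suc n) \<sigma>) \<partial>PiM (Wn U (Suc n)) (site_law p))
      \<le> (\<integral>\<^sup>+w. C w \<partial>PiM (Wn U n) (site_law p))"
    unfolding WS by (rule step[OF finW fin dWU inner])
  also have "\<dots> = ennreal (if n \<in> K then b else 1) * (\<integral>\<^sup>+w. ennreal (Phi n w) \<partial>PiM (Wn U n) (site_law p))"
    unfolding C_def using b Phi_nn
    by (subst nn_integral_cmult[symmetric]) (auto intro: meas_site finW simp: ennreal_mult)
  also have "\<dots> \<le> ennreal (if n \<in> K then b else 1) * ennreal (b ^ card (K \<inter> {..<n}))"
    using Suc.IH by (intro mult_left_mono) (auto simp: b_def)
  also have "\<dots> = ennreal (b ^ card (K \<inter> {..<Suc n}))"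
  proof -
    have "K \<inter> {..<Suc n} = (if n \<in> K then insert n (K \<inter> {..<n}) else K \<inter> {..<n})"
      by (auto simp: lessThan_Suc)
    then show ?thesis using b by (auto simp: ennreal_mult[symmetric])
  qed
  finally show ?case by (simp add: b_def)
qed


lemma chain_final:
  fixes U :: "nat \<Rightarrow> (int\<times>int) set" and K :: "nat set"
  assumes fin: "\<And>c. finite (U c)" and card: "\<And>c. card (U c) = m" and m: "1 \<le> m"
    and disj: "\<And>c c'. c \<noteq> c' \<Longrightarrow> U c \<inter> U c' = {}"
    and p: "0 < p" "p < 1" and K: "K \<subseteq> {c. c + 1 < N}"
  shows "(\<integral>\<^sup>+\<sigma>. ennreal (if chainE U K N \<sigma> then 1 else 0) \<partial>PiM (Wn U N) (site_law p))
     \<le> ennreal (beta (1 - (1-p)^m) ^ card K)"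
proof -
  have "K \<inter> {..<N} = K" using K by auto
  moreover have "(if chainE U K N \<sigma> then (if 1 \<le> N \<and> N - 1 \<in> K \<and> allE (U (N-1)) \<sigma>
       then (1 - (1-p)^m) / beta (1 - (1-p)^m) else 1) else (0::real)) = (if chainE U K N \<sigma> then 1 else 0)" for \<sigma>
    using K by auto
  ultimately show ?thesis
    using chain_bound[where U=U and K=K and n=N and m=m and p=p, OF fin card m disj p] by simp
qed

lemma merge_W: "v \<in> W \<Longrightarrow> merge W U (w,x) v = w v"
  by (simp add: merge_def)

lemma merge_U: "v \<in> U \<Longrightarrow> v \<notin> W \<Longrightarrow> merge W U (w,x) v = x v"
  by (simp add: merge_def)

lemma stage:
  fixes V :: "nat \<Rightarrow> (int\<times>int) set" and K :: "config \<Rightarrow> nat set" and R :: "config \<Rightarrow> real"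
  assumes fin: "\<And>c. finite (V c)" and card: "\<And>c. card (V c) = m" and m: "1 \<le> m"
    and disj: "\<And>c c'. c \<noteq> c' \<Longrightarrow> V c \<inter> V c' = {}"
    and p: "0 < p" "p < 1"
    and W: "finite W" and WU: "W \<inter> Wn V n = {}"
    and Kd: "\<And>\<sigma> \<sigma>'. (\<And>v. v \<in> W \<Longrightarrow> \<sigma> v = \<sigma>' v) \<Longrightarrow> K \<sigma> = K \<sigma>'"
    and Rd: "\<And>\<sigma> \<sigma>'. (\<And>v. v \<in> W \<Longrightarrow> \<sigma> v = \<sigma>' v) \<Longrightarrow> R \<sigma> = R \<sigma>'"
    and Ks: "\<And>\<sigma>. K \<sigma> \<subseteq> {c. c + 1 < n}"
    and Rn: "\<And>\<sigma>. 0 \<le> R \<sigma>"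
  shows "(\<integral>\<^sup>+\<sigma>. ennreal ((if chainE V (K \<sigma>) n \<sigma> then 1 else 0) * R \<sigma>) \<partial>PiM (W \<union> Wn V n) (site_law p))
     \<le> (\<integral>\<^sup>+w. ennreal (beta (1 - (1-p)^m) ^ card (K w) * R w) \<partial>PiM W (site_law p))"
proof (rule step[OF W])
  show "finite (Wn V n)" by (simp add: Wn_def fin)
  show "W \<inter> Wn V n = {}" by fact
  fix w assume w: "w \<in> space (PiM W (site_law p))"
  let ?s = "\<lambda>x. merge W (Wn V n) (w,x)"
  have K1: "K (?s x) = K w" for x by (rule Kd) (simp add: merge_W)
  have R1: "R (?s x) = R w" for x by (rule Rd) (simp add: merge_W)
  have C1: "chainE V (K w) n (?s x) = chainE V (K w) n x" for x
  proof (rule chainE_cong, rule allE_cong)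
    fix c v assume "c < n" "v \<in> V c"
    then have "v \<in> Wn V n" by (auto simp: Wn_def)
    then show "?s x v = x v" using WU by (intro merge_U) auto
  qed
  have "(\<integral>\<^sup>+x. ennreal ((if chainE V (K (?s x)) n (?s x) then 1 else 0) * R (?s x)) \<partial>PiM (Wn V n) (site_law p))
     = (\<integral>\<^sup>+x. ennreal (R w) * ennreal (if chainE V (K w) n x then 1 else 0) \<partial>PiM (Wn V n) (site_law p))"
    unfolding K1 R1 C1 using Rn by (intro nn_integral_cong) (simp add: ennreal_mult' mult.commute)
  also have "\<dots> = ennreal (R w) * (\<integral>\<^sup>+x. ennreal (if chainE V (K w) n x then 1 else 0) \<partial>PiM (Wn V n) (site_law p))"
    by (rule nn_integral_cmult) (intro meas_site, simp add: Wn_def fin)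
  also have "\<dots> \<le> ennreal (R w) * ennreal (beta (1 - (1-p)^m) ^ card (K w))"
  proof -
    have "(\<integral>\<^sup>+x. ennreal (if chainE V (K w) n x then 1 else 0) \<partial>PiM (Wn V n) (site_law p)) \<le> ennreal (beta (1 - (1-p)^m) ^ card (K w))"
      by (rule chain_final[where U=V and m=m and p=p and K="K w" and N=n, OF fin card m disj p Ks])
    then show ?thesis by (rule mult_left_mono) simp
  qed
  also have "\<dots> = ennreal (beta (1 - (1-p)^m) ^ card (K w) * R w)"
    using Rn by (simp add: ennreal_mult'[symmetric] mult.commute)
  finally show "(\<integral>\<^sup>+x. ennreal ((if chainE V (K (?s x)) n (?s x) then 1 else 0) * R (?s x)) \<partial>PiM (Wn V n) (site_law p))
     \<le> ennreal (beta (1 - (1-p)^m) ^ card (K w) * R w)" .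
qed


definition colU :: "int \<Rightarrow> int set \<Rightarrow> nat \<Rightarrow> (int\<times>int) set" where
  "colU x0 Y c = {x0 + int c} \<times> Y"
definition rowU :: "int set \<Rightarrow> int \<Rightarrow> nat \<Rightarrow> (int\<times>int) set" where
  "rowU X y0 c = X \<times> {y0 + int c}"
definition Kset :: "(nat \<Rightarrow> (int\<times>int) set) \<Rightarrow> nat \<Rightarrow> config \<Rightarrow> nat set" where
  "Kset Cu n \<sigma> = {c. c + 1 < n \<and> allE (Cu c) \<sigma> \<and> allE (Cu (c+1)) \<sigma>}"

lemma colU_fin: "finite Y \<Longrightarrow> finite (colU x0 Y c)" by (simp add: colU_def)
lemma rowU_fin: "finite X \<Longrightarrow> finite (rowU X y0 c)" by (simp add: rowU_def)
lemma colU_card: "card (colU x0 Y c) = card Y" by (simp add: colU_def card_cartesian_product)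
lemma rowU_card: "card (rowU X y0 c) = card X" by (simp add: rowU_def card_cartesian_product)
lemma colU_disj: "c \<noteq> c' \<Longrightarrow> colU x0 Y c \<inter> colU x0 Y c' = {}" by (auto simp: colU_def)
lemma rowU_disj: "c \<noteq> c' \<Longrightarrow> rowU X y0 c \<inter> rowU X y0 c' = {}" by (auto simp: rowU_def)

lemma Wn_colU: "Wn (colU x0 Y) n = {x0..x0 + int n - 1} \<times> Y"
proof
  show "Wn (colU x0 Y) n \<subseteq> {x0..x0 + int n - 1} \<times> Y" by (auto simp: Wn_def colU_def)
  show "{x0..x0 + int n - 1} \<times> Y \<subseteq> Wn (colU x0 Y) n"
  proof clarify
    fix x y assume "x \<in> {x0..x0 + int n - 1}" "y \<in> Y"
    then have "nat (x - x0) < n" "(x, y) \<in> colU x0 Y (nat (x - x0))" by (auto simp: colU_def)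
    then show "(x, y) \<in> Wn (colU x0 Y) n" by (auto simp: Wn_def)
  qed
qed

lemma Wn_rowU: "Wn (rowU X y0) n = X \<times> {y0..y0 + int n - 1}"
proof
  show "Wn (rowU X y0) n \<subseteq> X \<times> {y0..y0 + int n - 1}" by (auto simp: Wn_def rowU_def)
  show "X \<times> {y0..y0 + int n - 1} \<subseteq> Wn (rowU X y0) n"
  proof clarify
    fix x y assume "y \<in> {y0..y0 + int n - 1}" "x \<in> X"
    then have "nat (y - y0) < n" "(x, y) \<in> rowU X y0 (nat (y - y0))" by (auto simp: rowU_def)
    then show "(x, y) \<in> Wn (rowU X y0) n" by (auto simp: Wn_def)
  qed
qed

lemma Kset_sub: "Kset Cu n \<sigma> \<subseteq> {c. c + 1 < n}" by (auto simp: Kset_def)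

lemma Kset_dep: "(\<And>v. v \<in> Wn Cu n \<Longrightarrow> \<sigma> v = \<sigma>' v) \<Longrightarrow> Kset Cu n \<sigma> = Kset Cu n \<sigma>'"
proof -
  assume H: "\<And>v. v \<in> Wn Cu n \<Longrightarrow> \<sigma> v = \<sigma>' v"
  have "allE (Cu c) \<sigma> = allE (Cu c) \<sigma>'" if "c < n" for c
    by (rule allE_cong) (use H that in \<open>auto simp: Wn_def\<close>)
  then show ?thesis unfolding Kset_def by (metis (no_types, lifting) add_lessD1 less_add_one Collect_cong)
qed

lemma chainE_dep: "(\<And>v. v \<in> Wn U n \<Longrightarrow> \<sigma> v = \<sigma>' v) \<Longrightarrow> chainE U K n \<sigma> = chainE U K n \<sigma>'"
  by (rule chainE_cong, rule allE_cong) (auto simp: Wn_def)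

lemma Kset_count:
  "n - 1 \<le> card (Kset Cu n \<sigma>) + 2 * card {c. c < n \<and> \<not> allE (Cu c) \<sigma>}"
proof -
  let ?B = "{c. c < n \<and> \<not> allE (Cu c) \<sigma>}"
  have sub: "{..<n-1} \<subseteq> Kset Cu n \<sigma> \<union> ?B \<union> (\<lambda>c. c - 1) ` ?B"
  proof
    fix c assume c: "c \<in> {..<n-1}"
    show "c \<in> Kset Cu n \<sigma> \<union> ?B \<union> (\<lambda>c. c - 1) ` ?B"
    proof (cases "allE (Cu c) \<sigma> \<and> allE (Cu (c+1)) \<sigma>")
      case True then show ?thesis using c by (auto simp: Kset_def)
    next
      case False
      then have "c \<in> ?B \<or> c + 1 \<in> ?B" using c by auto
      moreover have "c = (c+1) - 1" by simp
      ultimately show ?thesis by blast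
    qed
  qed
  have "n - 1 = card {..<n-1}" by simp
  also have "\<dots> \<le> card (Kset Cu n \<sigma> \<union> ?B \<union> (\<lambda>c. c - 1) ` ?B)"
    by (rule card_mono[OF _ sub]) (auto intro: finite_subset[of _ "{..<n}"] simp: Kset_def)
  also have "\<dots> \<le> card (Kset Cu n \<sigma>) + card ?B + card ((\<lambda>c. c - 1) ` ?B)"
    by (metis (no_types, lifting) add_le_mono card_Un_le order_trans le_refl)
  also have "\<dots> \<le> card (Kset Cu n \<sigma>) + 2 * card ?B"
    using card_image_le[of ?B "\<lambda>c. c - 1"] by simp
  finally show ?thesis .
qed

lemma bad_col:
  assumes "finite Y"
  shows "card {c. c < n \<and> \<not> allE (colU x0 Y c) \<sigma>}
     \<le> card {v \<in> {x0..x0 + int n - 1} \<times> Y. \<sigma> v \<noteq> Empty}"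
proof -
  let ?S = "{v \<in> {x0..x0 + int n - 1} \<times> Y. \<sigma> v \<noteq> Empty}"
  have "{c. c < n \<and> \<not> allE (colU x0 Y c) \<sigma>} \<subseteq> (\<lambda>v. nat (fst v - x0)) ` ?S"
  proof
    fix c assume "c \<in> {c. c < n \<and> \<not> allE (colU x0 Y c) \<sigma>}"
    then obtain y where y: "y \<in> Y" "\<sigma> (x0 + int c, y) \<noteq> Empty" "c < n"
      by (auto simp: allE_def colU_def)
    then have "(x0 + int c, y) \<in> ?S" by auto
    moreover have "c = nat (fst (x0 + int c, y) - x0)" by simp
    ultimately show "c \<in> (\<lambda>v. nat (fst v - x0)) ` ?S" by blast
  qed
  then have "card {c. c < n \<and> \<not> allE (colU x0 Y c) \<sigma>} \<le> card ((\<lambda>v. nat (fst v - x0)) ` ?S)"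
    by (rule card_mono[rotated]) (use assms in auto)
  also have "\<dots> \<le> card ?S" by (rule card_image_le) (use assms in auto)
  finally show ?thesis .
qed

lemma bad_row:
  assumes "finite X"
  shows "card {c. c < n \<and> \<not> allE (rowU X y0 c) \<sigma>}
     \<le> card {v \<in> X \<times> {y0..y0 + int n - 1}. \<sigma> v \<noteq> Empty}"
proof -
  let ?S = "{v \<in> X \<times> {y0..y0 + int n - 1}. \<sigma> v \<noteq> Empty}"
  have "{c. c < n \<and> \<not> allE (rowU X y0 c) \<sigma>} \<subseteq> (\<lambda>v. nat (snd v - y0)) ` ?S"
  proof
    fix c assume "c \<in> {c. c < n \<and> \<not> allE (rowU X y0 c) \<sigma>}"
    then obtain x where x: "x \<in> X" "\<sigma> (x, y0 + int c) \<noteq> Empty" "c < n"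
      by (auto simp: allE_def rowU_def)
    then have "(x, y0 + int c) \<in> ?S" by auto
    moreover have "c = nat (snd (x, y0 + int c) - y0)" by simp
    ultimately show "c \<in> (\<lambda>v. nat (snd v - y0)) ` ?S" by blast
  qed
  then have "card {c. c < n \<and> \<not> allE (rowU X y0 c) \<sigma>} \<le> card ((\<lambda>v. nat (snd v - y0)) ` ?S)"
    by (rule card_mono[rotated]) (use assms in auto)
  also have "\<dots> \<le> card ?S" by (rule card_image_le) (use assms in auto)
  finally show ?thesis .
qed

lemma meas_site_law: "f \<in> borel_measurable (site_law p v)"
  by (rule measurableI) auto

lemma site_int:
  assumes p: "0 \<le> p" "p \<le> 1" and c: "0 \<le> c"
  shows "(\<integral>\<^sup>+st. ennreal (if st \<noteq> Empty then c else 1) \<partial>site_law p v) = ennreal (1 - p + p * c)"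
proof -
  let ?M = "site_law p v"
  interpret prob_space ?M by (rule prob_space_site_law)
  have mE: "measure ?M {Empty} = 1 - p"
    using emeasure_site_Empty[OF p, of v] p by (simp add: emeasure_eq_measure)
  have mC: "measure ?M (space ?M - {Empty}) = p" using prob_compl[of "{Empty}"] mE by simp
  have "(\<integral>\<^sup>+st. ennreal (if st \<noteq> Empty then c else 1) \<partial>?M)
     = (\<integral>\<^sup>+st. ennreal 1 * indicator {Empty} st + ennreal c * indicator (space ?M - {Empty}) st \<partial>?M)"
    by (rule nn_integral_cong) (auto simp: indicator_def)
  also have "\<dots> = ennreal 1 * emeasure ?M {Empty} + ennreal c * emeasure ?M (space ?M - {Empty})"
    by (subst nn_integral_add) (auto simp: nn_integral_cmult_indicator meas_site_law)
  also have "\<dots> = ennreal (1 - p + p * c)"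
    using mE mC c p by (simp add: emeasure_eq_measure ennreal_mult ennreal_plus[symmetric] mult.commute)
  finally show ?thesis .
qed

lemma corner_int:
  assumes S: "finite S" and p: "0 \<le> p" "p \<le> 1" and c: "0 \<le> c"
  shows "(\<integral>\<^sup>+\<sigma>. ennreal (c ^ card {v \<in> S. \<sigma> v \<noteq> Empty}) \<partial>PiM S (site_law p))
     = ennreal ((1 - p + p * c) ^ card S)"
proof -
  interpret product_prob_space "site_law p" by (rule pps)
  have "(\<integral>\<^sup>+\<sigma>. ennreal (c ^ card {v \<in> S. \<sigma> v \<noteq> Empty}) \<partial>PiM S (site_law p))
     = (\<integral>\<^sup>+\<sigma>. (\<Prod>v\<in>S. ennreal (if \<sigma> v \<noteq> Empty then c else 1)) \<partial>PiM S (site_law p))"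
  proof (rule nn_integral_cong)
    fix \<sigma>
    have "c ^ card {v \<in> S. \<sigma> v \<noteq> Empty} = (\<Prod>v\<in>S. (if \<sigma> v \<noteq> Empty then c else 1))"
      using S by (simp add: prod.If_cases Int_def)
    then show "ennreal (c ^ card {v \<in> S. \<sigma> v \<noteq> Empty}) = (\<Prod>v\<in>S. ennreal (if \<sigma> v \<noteq> Empty then c else 1))"
      using c by (simp add: prod_ennreal)
  qed
  also have "\<dots> = (\<Prod>v\<in>S. (\<integral>\<^sup>+st. ennreal (if st \<noteq> Empty then c else 1) \<partial>site_law p v))"
    by (rule product_nn_integral_prod[OF S]) (rule meas_site_law)
  also have "\<dots> = (\<Prod>v\<in>S. ennreal (1 - p + p * c))" using site_int[OF p c] by simp
  also have "\<dots> = ennreal ((1 - p + p * c) ^ card S)"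
    using p c by (simp add: ennreal_power del: ennreal_plus)
  finally show ?thesis .
qed


lemma col_chain:
  assumes "\<not> double_gap_cols \<sigma> x0 (x0 + int n - 1) Y1 Y2" and "{Y1..Y2} \<subseteq> Ym \<union> Ys"
  shows "chainE (colU x0 Ym) (Kset (colU x0 Ys) n \<sigma>) n \<sigma>"
  unfolding chainE_def
proof (intro allI impI notI)
  fix c assume c: "c + 1 < n" "c \<in> Kset (colU x0 Ys) n \<sigma>"
    and m: "allE (colU x0 Ym c) \<sigma> \<and> allE (colU x0 Ym (c + 1)) \<sigma>"
  have "double_gap_cols \<sigma> x0 (x0 + int n - 1) Y1 Y2"
    unfolding double_gap_cols_def
  proof (intro exI conjI ballI)
    show "x0 \<le> x0 + int c" by simp
    show "x0 + int c + 1 \<le> x0 + int n - 1" using c by simp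
    fix y assume y: "y \<in> {Y1..Y2}"
    then have "y \<in> Ym \<or> y \<in> Ys" using assms(2) by auto
    then show "\<sigma> (x0 + int c, y) = Empty" "\<sigma> (x0 + int c + 1, y) = Empty"
      using c(2) m by (auto simp: Kset_def allE_def colU_def ac_simps)
  qed
  then show False using assms(1) by simp
qed

lemma row_chain:
  assumes "\<not> double_gap_rows \<sigma> X1 X2 y0 (y0 + int n - 1)" and "{X1..X2} \<subseteq> Xm \<union> Xs"
  shows "chainE (rowU Xm y0) (Kset (rowU Xs y0) n \<sigma>) n \<sigma>"
  unfolding chainE_def
proof (intro allI impI notI)
  fix c assume c: "c + 1 < n" "c \<in> Kset (rowU Xs y0) n \<sigma>"
    and m: "allE (rowU Xm y0 c) \<sigma> \<and> allE (rowU Xm y0 (c + 1)) \<sigma>"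
  have "double_gap_rows \<sigma> X1 X2 y0 (y0 + int n - 1)"
    unfolding double_gap_rows_def
  proof (intro exI conjI ballI)
    show "y0 \<le> y0 + int c" by simp
    show "y0 + int c + 1 \<le> y0 + int n - 1" using c by simp
    fix x assume x: "x \<in> {X1..X2}"
    then have "x \<in> Xm \<or> x \<in> Xs" using assms(2) by auto
    then show "\<sigma> (x, y0 + int c) = Empty" "\<sigma> (x, y0 + int c + 1) = Empty"
      using c(2) m by (auto simp: Kset_def allE_def rowU_def ac_simps)
  qed
  then show False using assms(1) by simp
qed

lemma dgc_cong:
  assumes "\<And>v. v \<in> {a..c} \<times> {b..d} \<Longrightarrow> \<sigma> v = \<sigma>' v"
  shows "double_gap_cols \<sigma> a c b d = double_gap_cols \<sigma>' a c b d"
  unfolding double_gap_cols_def using assms by (auto 0 4)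

lemma dgr_cong:
  assumes "\<And>v. v \<in> {a..c} \<times> {b..d} \<Longrightarrow> \<sigma> v = \<sigma>' v"
  shows "double_gap_rows \<sigma> a c b d = double_gap_rows \<sigma>' a c b d"
  unfolding double_gap_rows_def using assms by (auto 0 4)


theorem lemma6:
  fixes p :: real and x1 x2 y1 y2 X1 X2 Y1 Y2 :: int
  assumes "0 < p" "p < 1"
    and "X1 \<le> x1" "x1 \<le> x2" "x2 \<le> X2"
    and "Y1 \<le> y1" "y1 \<le> y2" "y2 \<le> Y2"
  defines "q \<equiv> - ln (1 - p)"
    and "a \<equiv> x2 - x1 + 1" and "b \<equiv> y2 - y1 + 1"
    and "s \<equiv> (X2 - X1) - (x2 - x1)" and "t \<equiv> (Y2 - Y1) - (y2 - y1)"
  shows "measure (P p) {\<sigma> \<in> space (P p). D_event x1 x2 y1 y2 X1 X2 Y1 Y2 \<sigma>}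
    \<le> exp (- real_of_int s * g (real_of_int b * q) - real_of_int t * g (real_of_int a * q)
           + 2 * (g (real_of_int b * q) + g (real_of_int a * q))
           + real_of_int s * real_of_int t * q * exp (2 * (g (real_of_int b * q) + g (real_of_int a * q))))"
proof -
  have p0: "0 \<le> p" "p \<le> 1" using assms by auto
  define s1 where "s1 = nat (x1 - X1)"
  define s2 where "s2 = nat (X2 - x2)"
  define t1 where "t1 = nat (y1 - Y1)"
  define t2 where "t2 = nat (Y2 - y2)"
  define XL where "XL = {X1..x1-1}"
  define XM where "XM = {x1..x2}"
  define XR where "XR = {x2+1..X2}"
  define YB where "YB = {Y1..y1-1}"
  define YM where "YM = {y1..y2}"
  define YT where "YT = {y2+1..Y2}"
  define XS where "XS = XL \<union> XR"
  define YS where "YS = YB \<union> YT"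
  have fin: "finite XL" "finite XM" "finite XR" "finite YB" "finite YM" "finite YT" "finite XS" "finite YS"
    by (simp_all add: XL_def XM_def XR_def YB_def YM_def YT_def XS_def YS_def)
  have XLe: "{X1..X1 + int s1 - 1} = XL" using assms by (simp add: s1_def XL_def)
  have XRe: "{x2+1..x2+1 + int s2 - 1} = XR" using assms by (simp add: s2_def XR_def)
  have YBe: "{Y1..Y1 + int t1 - 1} = YB" using assms by (simp add: t1_def YB_def)
  have YTe: "{y2+1..y2+1 + int t2 - 1} = YT" using assms by (simp add: t2_def YT_def)
  have Ycov: "{Y1..Y2} \<subseteq> YM \<union> YS" by (auto simp: YM_def YS_def YB_def YT_def)
  have Xcov: "{X1..X2} \<subseteq> XM \<union> XS" by (auto simp: XM_def XS_def XL_def XR_def)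
  have cardYM: "card YM = nat b" by (simp add: YM_def b_def)
  have cardXM: "card XM = nat a" by (simp add: XM_def a_def)
  have b1: "1 \<le> nat b" "1 \<le> b" using assms by (auto simp: b_def)
  have a1: "1 \<le> nat a" "1 \<le> a" using assms by (auto simp: a_def)

  define KL where "KL = Kset (colU X1 YS) s1"
  define KR where "KR = Kset (colU (x2+1) YS) s2"
  define KB where "KB = Kset (rowU XS Y1) t1"
  define KT where "KT = Kset (rowU XS (y2+1)) t2"
  define iL where "iL = (\<lambda>\<sigma>. if chainE (colU X1 YM) (KL \<sigma>) s1 \<sigma> then 1 else (0::real))"
  define iR where "iR = (\<lambda>\<sigma>. if chainE (colU (x2+1) YM) (KR \<sigma>) s2 \<sigma> then 1 else (0::real))"
  define iB where "iB = (\<lambda>\<sigma>. if chainE (rowU XM Y1) (KB \<sigma>) t1 \<sigma> then 1 else (0::real))"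
  define iT where "iT = (\<lambda>\<sigma>. if chainE (rowU XM (y2+1)) (KT \<sigma>) t2 \<sigma> then 1 else (0::real))"
  define bb where "bb = beta (1 - (1-p)^nat b)"
  define ba where "ba = beta (1 - (1-p)^nat a)"
  define eL where "eL = (\<lambda>\<sigma>. bb ^ card (KL \<sigma>))"
  define eR where "eR = (\<lambda>\<sigma>. bb ^ card (KR \<sigma>))"
  define eB where "eB = (\<lambda>\<sigma>. ba ^ card (KB \<sigma>))"
  define eT where "eT = (\<lambda>\<sigma>. ba ^ card (KT \<sigma>))"
  define Cor where "Cor = XS \<times> YS"
  define LL where "LL = XL \<times> YM"
  define RR where "RR = XR \<times> YM"
  define BB where "BB = XM \<times> YB"
  define TT where "TT = XM \<times> YT"
  define J3 where "J3 = Cor \<union> TT"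
  define J2 where "J2 = J3 \<union> BB"
  define J1 where "J1 = J2 \<union> RR"
  define J0 where "J0 = J1 \<union> LL"
  have finJ: "finite Cor" "finite J3" "finite J2" "finite J1" "finite J0"
    using fin by (simp_all add: Cor_def J3_def J2_def J1_def J0_def LL_def RR_def BB_def TT_def)
  have WL: "Wn (colU X1 YM) s1 = LL" "Wn (colU X1 YS) s1 = XL \<times> YS"
    by (simp_all add: Wn_colU XLe LL_def)
  have WR: "Wn (colU (x2+1) YM) s2 = RR" "Wn (colU (x2+1) YS) s2 = XR \<times> YS"
    unfolding Wn_colU XRe RR_def by simp_all
  have WB: "Wn (rowU XM Y1) t1 = BB" "Wn (rowU XS Y1) t1 = XS \<times> YB"
    by (simp_all add: Wn_rowU YBe BB_def)
  have WT: "Wn (rowU XM (y2+1)) t2 = TT" "Wn (rowU XS (y2+1)) t2 = XS \<times> YT"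
    unfolding Wn_rowU YTe TT_def by simp_all
  have disj: "J1 \<inter> LL = {}" "J2 \<inter> RR = {}" "J3 \<inter> BB = {}" "Cor \<inter> TT = {}"
    using assms by (auto simp: J0_def J1_def J2_def J3_def Cor_def LL_def RR_def BB_def TT_def
        XS_def YS_def XL_def XM_def XR_def YB_def YM_def YT_def)
  have subs: "XL \<times> YS \<subseteq> Cor" "XR \<times> YS \<subseteq> Cor" "XS \<times> YB \<subseteq> Cor" "XS \<times> YT \<subseteq> Cor"
    "Cor \<subseteq> J3" "J3 \<subseteq> J2" "J2 \<subseteq> J1" "J1 \<subseteq> J0" "LL \<subseteq> J0" "RR \<subseteq> J1" "BB \<subseteq> J2" "TT \<subseteq> J3"
    "Cor \<subseteq> J2" "Cor \<subseteq> J1" "TT \<subseteq> J2" "TT \<subseteq> J1" "BB \<subseteq> J1"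
    by (auto simp: J0_def J1_def J2_def J3_def Cor_def XS_def YS_def)
  have dKL: "KL \<sigma> = KL \<sigma>'" if "\<And>v. v \<in> Cor \<Longrightarrow> \<sigma> v = \<sigma>' v" for \<sigma> \<sigma>'
    unfolding KL_def by (rule Kset_dep) (use that subs WL in auto)
  have dKR: "KR \<sigma> = KR \<sigma>'" if "\<And>v. v \<in> Cor \<Longrightarrow> \<sigma> v = \<sigma>' v" for \<sigma> \<sigma>'
    unfolding KR_def by (rule Kset_dep) (use that subs WR in auto)
  have dKB: "KB \<sigma> = KB \<sigma>'" if "\<And>v. v \<in> Cor \<Longrightarrow> \<sigma> v = \<sigma>' v" for \<sigma> \<sigma>'
    unfolding KB_def by (rule Kset_dep) (use that subs WB in auto)
  have dKT: "KT \<sigma> = KT \<sigma>'" if "\<And>v. v \<in> Cor \<Longrightarrow> \<sigma> v = \<sigma>' v" for \<sigma> \<sigma>'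
    unfolding KT_def by (rule Kset_dep) (use that subs WT in auto)
  have diL: "iL \<sigma> = iL \<sigma>'" if "\<And>v. v \<in> LL \<union> Cor \<Longrightarrow> \<sigma> v = \<sigma>' v" for \<sigma> \<sigma>'
  proof -
    have "KL \<sigma> = KL \<sigma>'" by (rule dKL) (use that in auto)
    moreover have "chainE (colU X1 YM) (KL \<sigma>') s1 \<sigma> = chainE (colU X1 YM) (KL \<sigma>') s1 \<sigma>'"
      by (rule chainE_dep) (use that WL in auto)
    ultimately show ?thesis by (simp add: iL_def)
  qed
  have diR: "iR \<sigma> = iR \<sigma>'" if "\<And>v. v \<in> RR \<union> Cor \<Longrightarrow> \<sigma> v = \<sigma>' v" for \<sigma> \<sigma>'
  proof -
    have "KR \<sigma> = KR \<sigma>'" by (rule dKR) (use that in auto)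
    moreover have "chainE (colU (x2+1) YM) (KR \<sigma>') s2 \<sigma> = chainE (colU (x2+1) YM) (KR \<sigma>') s2 \<sigma>'"
      by (rule chainE_dep) (use that WR in auto)
    ultimately show ?thesis by (simp add: iR_def)
  qed
  have diB: "iB \<sigma> = iB \<sigma>'" if "\<And>v. v \<in> BB \<union> Cor \<Longrightarrow> \<sigma> v = \<sigma>' v" for \<sigma> \<sigma>'
  proof -
    have "KB \<sigma> = KB \<sigma>'" by (rule dKB) (use that in auto)
    moreover have "chainE (rowU XM Y1) (KB \<sigma>') t1 \<sigma> = chainE (rowU XM Y1) (KB \<sigma>') t1 \<sigma>'"
      by (rule chainE_dep) (use that WB in auto)
    ultimately show ?thesis by (simp add: iB_def)
  qed
  have diT: "iT \<sigma> = iT \<sigma>'" if "\<And>v. v \<in> TT \<union> Cor \<Longrightarrow> \<sigma> v = \<sigma>' v" for \<sigma> \<sigma>'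
  proof -
    have "KT \<sigma> = KT \<sigma>'" by (rule dKT) (use that in auto)
    moreover have "chainE (rowU XM (y2+1)) (KT \<sigma>') t2 \<sigma> = chainE (rowU XM (y2+1)) (KT \<sigma>') t2 \<sigma>'"
      by (rule chainE_dep) (use that WT in auto)
    ultimately show ?thesis by (simp add: iT_def)
  qed
  have bbp: "0 < bb" and bap: "0 < ba"
  proof -
    have "0 < 1 - (1-p)^nat b" "1 - (1-p)^nat b \<le> 1"
      using assms b1 by (auto intro: power_less_one_iff[THEN iffD2])
    then show "0 < bb" unfolding bb_def by (rule beta_props)
    have "0 < 1 - (1-p)^nat a" "1 - (1-p)^nat a \<le> 1"
      using assms a1 by (auto intro: power_less_one_iff[THEN iffD2])
    then show "0 < ba" unfolding ba_def by (rule beta_props)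
  qed
  have nn: "0 \<le> iL \<sigma>" "0 \<le> iR \<sigma>" "0 \<le> iB \<sigma>" "0 \<le> iT \<sigma>"
     "0 \<le> eL \<sigma>" "0 \<le> eR \<sigma>" "0 \<le> eB \<sigma>" "0 \<le> eT \<sigma>" for \<sigma>
    using bbp bap by (simp_all add: iL_def iR_def iB_def iT_def eL_def eR_def eB_def eT_def)

  have st1: "(\<integral>\<^sup>+\<sigma>. ennreal (iL \<sigma> * (iR \<sigma> * iB \<sigma> * iT \<sigma>)) \<partial>PiM J0 (site_law p))
      \<le> (\<integral>\<^sup>+w. ennreal (eL w * (iR w * iB w * iT w)) \<partial>PiM J1 (site_law p))"
    unfolding iL_def eL_def bb_def J0_def WL(1)[symmetric]
  proof (rule stage)
    show "\<And>c. finite (colU X1 YM c)" using fin by (simp add: colU_fin)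
    show "\<And>c. card (colU X1 YM c) = nat b" by (simp add: colU_card cardYM)
    show "1 \<le> nat b" by (rule b1)
    show "\<And>c c'. c \<noteq> c' \<Longrightarrow> colU X1 YM c \<inter> colU X1 YM c' = {}" by (rule colU_disj)
    show "0 < p" "p < 1" by (rule assms)+
    show "finite J1" by (rule finJ)
    show "J1 \<inter> Wn (colU X1 YM) s1 = {}" using disj WL by simp
    show "KL \<sigma> = KL \<sigma>'" if "\<And>v. v \<in> J1 \<Longrightarrow> \<sigma> v = \<sigma>' v" for \<sigma> \<sigma>'
      by (rule dKL) (use that subs in auto)
    show "iR \<sigma> * iB \<sigma> * iT \<sigma> = iR \<sigma>' * iB \<sigma>' * iT \<sigma>'" if "\<And>v. v \<in> J1 \<Longrightarrow> \<sigma> v = \<sigma>' v" for \<sigma> \<sigma>'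
    proof -
      have "iR \<sigma> = iR \<sigma>'" by (rule diR) (use that subs in auto)
      moreover have "iB \<sigma> = iB \<sigma>'" by (rule diB) (use that subs in auto)
      moreover have "iT \<sigma> = iT \<sigma>'" by (rule diT) (use that subs in auto)
      ultimately show ?thesis by simp
    qed
    show "KL \<sigma> \<subseteq> {c. c + 1 < s1}" for \<sigma> unfolding KL_def by (rule Kset_sub)
    show "0 \<le> iR \<sigma> * iB \<sigma> * iT \<sigma>" for \<sigma> using nn by simp
  qed
  have st2: "(\<integral>\<^sup>+\<sigma>. ennreal (iR \<sigma> * (eL \<sigma> * iB \<sigma> * iT \<sigma>)) \<partial>PiM J1 (site_law p))
      \<le> (\<integral>\<^sup>+w. ennreal (eR w * (eL w * iB w * iT w)) \<partial>PiM J2 (site_law p))"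
    unfolding iR_def eR_def bb_def J1_def WR(1)[symmetric]
  proof (rule stage)
    show "\<And>c. finite (colU (x2+1) YM c)" using fin by (simp add: colU_fin)
    show "\<And>c. card (colU (x2+1) YM c) = nat b" by (simp add: colU_card cardYM)
    show "1 \<le> nat b" by (rule b1)
    show "\<And>c c'. c \<noteq> c' \<Longrightarrow> colU (x2+1) YM c \<inter> colU (x2+1) YM c' = {}" by (rule colU_disj)
    show "0 < p" "p < 1" by (rule assms)+
    show "finite J2" by (rule finJ)
    show "J2 \<inter> Wn (colU (x2+1) YM) s2 = {}" using disj WR by simp
    show "KR \<sigma> = KR \<sigma>'" if "\<And>v. v \<in> J2 \<Longrightarrow> \<sigma> v = \<sigma>' v" for \<sigma> \<sigma>'
      by (rule dKR) (use that subs in auto)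
    show "eL \<sigma> * iB \<sigma> * iT \<sigma> = eL \<sigma>' * iB \<sigma>' * iT \<sigma>'" if "\<And>v. v \<in> J2 \<Longrightarrow> \<sigma> v = \<sigma>' v" for \<sigma> \<sigma>'
    proof -
      have "KL \<sigma> = KL \<sigma>'" by (rule dKL) (use that subs in auto)
      then have "eL \<sigma> = eL \<sigma>'" by (simp add: eL_def)
      moreover have "iB \<sigma> = iB \<sigma>'" by (rule diB) (use that subs in auto)
      moreover have "iT \<sigma> = iT \<sigma>'" by (rule diT) (use that subs in auto)
      ultimately show ?thesis by simp
    qed
    show "KR \<sigma> \<subseteq> {c. c + 1 < s2}" for \<sigma> unfolding KR_def by (rule Kset_sub)
    show "0 \<le> eL \<sigma> * iB \<sigma> * iT \<sigma>" for \<sigma> using nn by simp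
  qed
  have st3: "(\<integral>\<^sup>+\<sigma>. ennreal (iB \<sigma> * (eR \<sigma> * eL \<sigma> * iT \<sigma>)) \<partial>PiM J2 (site_law p))
      \<le> (\<integral>\<^sup>+w. ennreal (eB w * (eR w * eL w * iT w)) \<partial>PiM J3 (site_law p))"
    unfolding iB_def eB_def ba_def J2_def WB(1)[symmetric]
  proof (rule stage)
    show "\<And>c. finite (rowU XM Y1 c)" using fin by (simp add: rowU_fin)
    show "\<And>c. card (rowU XM Y1 c) = nat a" by (simp add: rowU_card cardXM)
    show "1 \<le> nat a" by (rule a1)
    show "\<And>c c'. c \<noteq> c' \<Longrightarrow> rowU XM Y1 c \<inter> rowU XM Y1 c' = {}" by (rule rowU_disj)
    show "0 < p" "p < 1" by (rule assms)+
    show "finite J3" by (rule finJ)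
    show "J3 \<inter> Wn (rowU XM Y1) t1 = {}" using disj WB by simp
    show "KB \<sigma> = KB \<sigma>'" if "\<And>v. v \<in> J3 \<Longrightarrow> \<sigma> v = \<sigma>' v" for \<sigma> \<sigma>'
      by (rule dKB) (use that subs in auto)
    show "eR \<sigma> * eL \<sigma> * iT \<sigma> = eR \<sigma>' * eL \<sigma>' * iT \<sigma>'" if "\<And>v. v \<in> J3 \<Longrightarrow> \<sigma> v = \<sigma>' v" for \<sigma> \<sigma>'
    proof -
      have "KL \<sigma> = KL \<sigma>'" by (rule dKL) (use that subs in auto)
      then have "eL \<sigma> = eL \<sigma>'" by (simp add: eL_def)
      moreover have "KR \<sigma> = KR \<sigma>'" by (rule dKR) (use that subs in auto)
      then have "eR \<sigma> = eR \<sigma>'" by (simp add: eR_def)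
      moreover have "iT \<sigma> = iT \<sigma>'" by (rule diT) (use that subs in auto)
      ultimately show ?thesis by simp
    qed
    show "KB \<sigma> \<subseteq> {c. c + 1 < t1}" for \<sigma> unfolding KB_def by (rule Kset_sub)
    show "0 \<le> eR \<sigma> * eL \<sigma> * iT \<sigma>" for \<sigma> using nn by simp
  qed
  have st4: "(\<integral>\<^sup>+\<sigma>. ennreal (iT \<sigma> * (eB \<sigma> * eR \<sigma> * eL \<sigma>)) \<partial>PiM J3 (site_law p))
      \<le> (\<integral>\<^sup>+w. ennreal (eT w * (eB w * eR w * eL w)) \<partial>PiM Cor (site_law p))"
    unfolding iT_def eT_def ba_def J3_def WT(1)[symmetric]
  proof (rule stage)
    show "\<And>c. finite (rowU XM (y2+1) c)" using fin by (simp add: rowU_fin)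
    show "\<And>c. card (rowU XM (y2+1) c) = nat a" by (simp add: rowU_card cardXM)
    show "1 \<le> nat a" by (rule a1)
    show "\<And>c c'. c \<noteq> c' \<Longrightarrow> rowU XM (y2+1) c \<inter> rowU XM (y2+1) c' = {}" by (rule rowU_disj)
    show "0 < p" "p < 1" by (rule assms)+
    show "finite Cor" by (rule finJ)
    show "Cor \<inter> Wn (rowU XM (y2+1)) t2 = {}" using disj WT by simp
    show "KT \<sigma> = KT \<sigma>'" if "\<And>v. v \<in> Cor \<Longrightarrow> \<sigma> v = \<sigma>' v" for \<sigma> \<sigma>'
      by (rule dKT) (use that in auto)
    show "eB \<sigma> * eR \<sigma> * eL \<sigma> = eB \<sigma>' * eR \<sigma>' * eL \<sigma>'" if "\<And>v. v \<in> Cor \<Longrightarrow> \<sigma> v = \<sigma>' v" for \<sigma> \<sigma>'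
      using dKL[OF that] dKR[OF that] dKB[OF that] by (simp add: eL_def eR_def eB_def)
    show "KT \<sigma> \<subseteq> {c. c + 1 < t2}" for \<sigma> unfolding KT_def by (rule Kset_sub)
    show "0 \<le> eB \<sigma> * eR \<sigma> * eL \<sigma>" for \<sigma> using nn by simp
  qed

  define gb where "gb = g (real_of_int b * q)"
  define ga where "ga = g (real_of_int a * q)"
  have expq: "exp (- (real_of_int k * q)) = (1-p)^nat k" if "1 \<le> k" for k :: int
  proof -
    have "exp (- (real_of_int k * q)) = exp (real (nat k) * ln (1-p))" using that by (simp add: q_def)
    also have "\<dots> = exp (ln ((1-p)^nat k))" using assms by (simp only: ln_realpow)
    also have "\<dots> = (1-p)^nat k" using assms by simp
    finally show ?thesis .
  qed
  have bbg: "bb = exp (- gb)" using bbp expq[OF b1(2)]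
    by (simp add: gb_def g_def bb_def)
  have bag: "ba = exp (- ga)" using bap expq[OF a1(2)]
    by (simp add: ga_def g_def ba_def)
  have bb1: "bb \<le> 1"
  proof -
    have "0 < 1 - (1-p)^nat b" "1 - (1-p)^nat b \<le> 1"
      using assms b1 by (auto intro: power_less_one_iff[THEN iffD2])
    then show ?thesis unfolding bb_def by (rule beta_props)
  qed
  have ba1: "ba \<le> 1"
  proof -
    have "0 < 1 - (1-p)^nat a" "1 - (1-p)^nat a \<le> 1"
      using assms a1 by (auto intro: power_less_one_iff[THEN iffD2])
    then show ?thesis unfolding ba_def by (rule beta_props)
  qed
  have gb0: "0 \<le> gb" using bbg bb1 by simp
  have ga0: "0 \<le> ga" using bag ba1 by simp
  have sS: "real_of_int s = real s1 + real s2" using assms by (simp add: s_def s1_def s2_def)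
  have tS: "real_of_int t = real t1 + real t2" using assms by (simp add: t_def t1_def t2_def)
  define Z where "Z = (\<lambda>\<sigma>. card {v \<in> Cor. \<sigma> v \<noteq> Empty})"
  define cc where "cc = exp (2 * (gb + ga))"
  define E0 where "E0 = exp (- real_of_int s * gb - real_of_int t * ga + 2 * (gb + ga))"
  have pw: "eT \<sigma> * (eB \<sigma> * eR \<sigma> * eL \<sigma>) \<le> E0 * cc ^ Z \<sigma>" for \<sigma>
  proof -
    define ZL where "ZL = card {v \<in> XL \<times> YS. \<sigma> v \<noteq> Empty}"
    define ZR where "ZR = card {v \<in> XR \<times> YS. \<sigma> v \<noteq> Empty}"
    define ZB where "ZB = card {v \<in> XS \<times> YB. \<sigma> v \<noteq> Empty}"
    define ZT where "ZT = card {v \<in> XS \<times> YT. \<sigma> v \<noteq> Empty}"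
    have ZLR: "ZL + ZR = Z \<sigma>"
    proof -
      have "{v \<in> Cor. \<sigma> v \<noteq> Empty} = {v \<in> XL \<times> YS. \<sigma> v \<noteq> Empty} \<union> {v \<in> XR \<times> YS. \<sigma> v \<noteq> Empty}"
        by (auto simp: Cor_def XS_def)
      moreover have "{v \<in> XL \<times> YS. \<sigma> v \<noteq> Empty} \<inter> {v \<in> XR \<times> YS. \<sigma> v \<noteq> Empty} = {}"
        using assms by (auto simp: XL_def XR_def)
      ultimately show ?thesis unfolding ZL_def ZR_def Z_def using fin
        by (simp add: card_Un_disjoint)
    qed
    have ZBT: "ZB + ZT = Z \<sigma>"
    proof -
      have "{v \<in> Cor. \<sigma> v \<noteq> Empty} = {v \<in> XS \<times> YB. \<sigma> v \<noteq> Empty} \<union> {v \<in> XS \<times> YT. \<sigma> v \<noteq> Empty}"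
        by (auto simp: Cor_def YS_def)
      moreover have "{v \<in> XS \<times> YB. \<sigma> v \<noteq> Empty} \<inter> {v \<in> XS \<times> YT. \<sigma> v \<noteq> Empty} = {}"
        using assms by (auto simp: YB_def YT_def)
      ultimately show ?thesis unfolding ZB_def ZT_def Z_def using fin
        by (simp add: card_Un_disjoint)
    qed
    have cL: "real s1 - 1 \<le> real (card (KL \<sigma>)) + 2 * real ZL"
    proof -
      have "s1 - 1 \<le> card (KL \<sigma>) + 2 * card {c. c < s1 \<and> \<not> allE (colU X1 YS c) \<sigma>}"
        unfolding KL_def by (rule Kset_count)
      moreover have "card {c. c < s1 \<and> \<not> allE (colU X1 YS c) \<sigma>} \<le> ZL"
        unfolding ZL_def XLe[symmetric] by (rule bad_col) (rule fin)
      ultimately have "s1 - 1 \<le> card (KL \<sigma>) + 2 * ZL" by linarith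
      then show ?thesis by linarith
    qed
    have cR: "real s2 - 1 \<le> real (card (KR \<sigma>)) + 2 * real ZR"
    proof -
      have "s2 - 1 \<le> card (KR \<sigma>) + 2 * card {c. c < s2 \<and> \<not> allE (colU (x2+1) YS c) \<sigma>}"
        unfolding KR_def by (rule Kset_count)
      moreover have "card {c. c < s2 \<and> \<not> allE (colU (x2+1) YS c) \<sigma>} \<le> ZR"
        unfolding ZR_def XRe[symmetric] by (rule bad_col) (rule fin)
      ultimately have "s2 - 1 \<le> card (KR \<sigma>) + 2 * ZR" by linarith
      then show ?thesis by linarith
    qed
    have cB: "real t1 - 1 \<le> real (card (KB \<sigma>)) + 2 * real ZB"
    proof -
      have "t1 - 1 \<le> card (KB \<sigma>) + 2 * card {c. c < t1 \<and> \<not> allE (rowU XS Y1 c) \<sigma>}"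
        unfolding KB_def by (rule Kset_count)
      moreover have "card {c. c < t1 \<and> \<not> allE (rowU XS Y1 c) \<sigma>} \<le> ZB"
        unfolding ZB_def YBe[symmetric] by (rule bad_row) (rule fin)
      ultimately have "t1 - 1 \<le> card (KB \<sigma>) + 2 * ZB" by linarith
      then show ?thesis by linarith
    qed
    have cT: "real t2 - 1 \<le> real (card (KT \<sigma>)) + 2 * real ZT"
    proof -
      have "t2 - 1 \<le> card (KT \<sigma>) + 2 * card {c. c < t2 \<and> \<not> allE (rowU XS (y2+1) c) \<sigma>}"
        unfolding KT_def by (rule Kset_count)
      moreover have "card {c. c < t2 \<and> \<not> allE (rowU XS (y2+1) c) \<sigma>} \<le> ZT"
        unfolding ZT_def YTe[symmetric] by (rule bad_row) (rule fin)
      ultimately have "t2 - 1 \<le> card (KT \<sigma>) + 2 * ZT" by linarith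
      then show ?thesis by linarith
    qed
    have hx: "real_of_int s - 2 - 2 * real (Z \<sigma>) \<le> real (card (KL \<sigma>)) + real (card (KR \<sigma>))"
    proof -
      have "real ZL + real ZR = real (Z \<sigma>)" using ZLR by (metis of_nat_add)
      then show ?thesis using cL cR sS by linarith
    qed
    have hy: "real_of_int t - 2 - 2 * real (Z \<sigma>) \<le> real (card (KB \<sigma>)) + real (card (KT \<sigma>))"
    proof -
      have "real ZB + real ZT = real (Z \<sigma>)" using ZBT by (metis of_nat_add)
      then show ?thesis using cB cT tS by linarith
    qed
    have "eT \<sigma> * (eB \<sigma> * eR \<sigma> * eL \<sigma>)
        = exp (- gb * (real (card (KL \<sigma>)) + real (card (KR \<sigma>))) - ga * (real (card (KB \<sigma>)) + real (card (KT \<sigma>))))"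
    proof -
      have "eT \<sigma> * (eB \<sigma> * eR \<sigma> * eL \<sigma>) = exp (real (card (KT \<sigma>)) * - ga) * (exp (real (card (KB \<sigma>)) * - ga)
         * exp (real (card (KR \<sigma>)) * - gb) * exp (real (card (KL \<sigma>)) * - gb))"
        unfolding eT_def eB_def eR_def eL_def bbg bag by (simp only: exp_of_nat_mult)
      also have "\<dots> = exp (real (card (KT \<sigma>)) * - ga + (real (card (KB \<sigma>)) * - ga
         + real (card (KR \<sigma>)) * - gb + real (card (KL \<sigma>)) * - gb))"
        by (simp only: exp_add)
      also have "\<dots> = exp (- gb * (real (card (KL \<sigma>)) + real (card (KR \<sigma>))) - ga * (real (card (KB \<sigma>)) + real (card (KT \<sigma>))))"
        by (rule arg_cong[where f=exp]) (simp add: algebra_simps)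
      finally show ?thesis .
    qed
    also have "\<dots> \<le> exp (- gb * (real_of_int s - 2 - 2 * real (Z \<sigma>)) - ga * (real_of_int t - 2 - 2 * real (Z \<sigma>)))"
      using mult_left_mono[OF hx gb0] mult_left_mono[OF hy ga0] by simp
    also have "\<dots> = E0 * cc ^ Z \<sigma>"
    proof -
      have "E0 * cc ^ Z \<sigma> = exp (- real_of_int s * gb - real_of_int t * ga + 2 * (gb + ga)) * exp (real (Z \<sigma>) * (2 * (gb + ga)))"
        unfolding E0_def cc_def by (simp only: exp_of_nat_mult)
      also have "\<dots> = exp (- real_of_int s * gb - real_of_int t * ga + 2 * (gb + ga) + real (Z \<sigma>) * (2 * (gb + ga)))"
        by (simp only: exp_add)
      finally show ?thesis by (simp add: algebra_simps)
    qed
    finally show ?thesis .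
  qed
  have cardCor: "real (card Cor) = real_of_int s * real_of_int t"
  proof -
    have "card XS = s1 + s2" using assms
      by (simp add: XS_def XL_def XR_def card_Un_disjoint s1_def s2_def ivl_disj_int)
    moreover have "card YS = t1 + t2" using assms
      by (simp add: YS_def YB_def YT_def card_Un_disjoint t1_def t2_def)
    ultimately show ?thesis using sS tS by (simp add: Cor_def card_cartesian_product)
  qed
  have pq: "p \<le> q" using ln_le_minus_one[of "1-p"] assms by (simp add: q_def)
  have cc1: "1 \<le> cc" using gb0 ga0 by (simp add: cc_def)
  have fb: "(\<integral>\<^sup>+w. ennreal (eT w * (eB w * eR w * eL w)) \<partial>PiM Cor (site_law p))
     \<le> ennreal (exp (- real_of_int s * gb - real_of_int t * ga + 2 * (gb + ga)
           + real_of_int s * real_of_int t * q * cc))"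
  proof -
    have "(\<integral>\<^sup>+w. ennreal (eT w * (eB w * eR w * eL w)) \<partial>PiM Cor (site_law p))
        \<le> (\<integral>\<^sup>+w. ennreal E0 * ennreal (cc ^ Z w) \<partial>PiM Cor (site_law p))"
      using pw by (intro nn_integral_mono) (simp add: ennreal_mult'[symmetric] E0_def ennreal_leI)
    also have "\<dots> = ennreal E0 * (\<integral>\<^sup>+w. ennreal (cc ^ Z w) \<partial>PiM Cor (site_law p))"
      by (rule nn_integral_cmult) (rule meas_site, rule finJ)
    also have "\<dots> = ennreal E0 * ennreal ((1 - p + p * cc) ^ card Cor)"
      unfolding Z_def using corner_int[OF finJ(1) p0, of cc] cc1 by simp
    also have "\<dots> \<le> ennreal E0 * ennreal (exp (real (card Cor) * q * cc))"
    proof (intro mult_left_mono ennreal_leI)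
      have "(1 - p + p * cc) ^ card Cor \<le> exp (p * (cc - 1)) ^ card Cor"
      proof (rule power_mono)
        show "1 - p + p * cc \<le> exp (p * (cc - 1))"
          using exp_ge_add_one_self[of "p * (cc - 1)"] by (simp add: algebra_simps)
        have "0 \<le> p * cc" using p0 cc1 by simp
        then show "0 \<le> 1 - p + p * cc" using p0 by linarith
      qed
      also have "\<dots> = exp (real (card Cor) * (p * (cc - 1)))" by (simp add: exp_of_nat_mult)
      also have "\<dots> \<le> exp (real (card Cor) * q * cc)"
      proof -
        have "p * (cc - 1) \<le> p * cc" using p0 by (simp add: algebra_simps)
        also have "p * cc \<le> q * cc" by (rule mult_right_mono) (use pq cc1 in auto)
        finally have "p * (cc - 1) \<le> q * cc" .
        then show ?thesis by (simp add: mult.assoc mult_left_mono)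
      qed
      finally show "(1 - p + p * cc) ^ card Cor \<le> exp (real (card Cor) * q * cc)" .
    qed simp
    also have "\<dots> = ennreal (exp (- real_of_int s * gb - real_of_int t * ga + 2 * (gb + ga)
           + real_of_int s * real_of_int t * q * cc))"
      unfolding E0_def cardCor by (simp add: ennreal_mult'[symmetric] exp_add[symmetric])
    finally show ?thesis .
  qed

  have eqs: "X1 + int s1 - 1 = x1 - 1" "x2 + 1 + int s2 - 1 = X2" "Y1 + int t1 - 1 = y1 - 1" "y2 + 1 + int t2 - 1 = Y2"
    using assms by (simp_all add: s1_def s2_def t1_def t2_def)
  have Ddep: "D_event x1 x2 y1 y2 X1 X2 Y1 Y2 \<sigma> = D_event x1 x2 y1 y2 X1 X2 Y1 Y2 \<sigma>'"
    if H: "\<And>v. v \<in> J0 \<Longrightarrow> \<sigma> v = \<sigma>' v" for \<sigma> \<sigma>'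
  proof -
    have "double_gap_cols \<sigma> X1 (x1 - 1) Y1 Y2 = double_gap_cols \<sigma>' X1 (x1 - 1) Y1 Y2"
      by (rule dgc_cong, rule H) (auto simp: J0_def J1_def J2_def J3_def Cor_def LL_def XS_def YS_def XL_def YB_def YM_def YT_def)
    moreover have "double_gap_cols \<sigma> (x2 + 1) X2 Y1 Y2 = double_gap_cols \<sigma>' (x2 + 1) X2 Y1 Y2"
      by (rule dgc_cong, rule H) (auto simp: J0_def J1_def J2_def J3_def Cor_def RR_def XS_def YS_def XR_def YB_def YM_def YT_def)
    moreover have "double_gap_rows \<sigma> X1 X2 Y1 (y1 - 1) = double_gap_rows \<sigma>' X1 X2 Y1 (y1 - 1)"
      by (rule dgr_cong, rule H) (auto simp: J0_def J1_def J2_def J3_def Cor_def BB_def XS_def YS_def XL_def XM_def XR_def YB_def)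
    moreover have "double_gap_rows \<sigma> X1 X2 (y2 + 1) Y2 = double_gap_rows \<sigma>' X1 X2 (y2 + 1) Y2"
      by (rule dgr_cong, rule H) (auto simp: J0_def J1_def J2_def J3_def Cor_def TT_def XS_def YS_def XL_def XM_def XR_def YT_def)
    ultimately show ?thesis by (simp add: D_event_def)
  qed
  have Dind: "indicator {\<omega> \<in> space (PiM J0 (site_law p)). D_event x1 x2 y1 y2 X1 X2 Y1 Y2 \<omega>} \<omega>
      \<le> ennreal (iL \<omega> * (iR \<omega> * iB \<omega> * iT \<omega>))" for \<omega>
  proof (cases "D_event x1 x2 y1 y2 X1 X2 Y1 Y2 \<omega>")
    case True
    then have h: "\<not> double_gap_cols \<omega> X1 (X1 + int s1 - 1) Y1 Y2" "\<not> double_gap_cols \<omega> (x2 + 1) (x2 + 1 + int s2 - 1) Y1 Y2"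
      "\<not> double_gap_rows \<omega> X1 X2 Y1 (Y1 + int t1 - 1)" "\<not> double_gap_rows \<omega> X1 X2 (y2 + 1) (y2 + 1 + int t2 - 1)"
      unfolding eqs by (simp_all add: D_event_def)
    have "iL \<omega> = 1" unfolding iL_def KL_def using col_chain[OF h(1) Ycov] by simp
    moreover have "iR \<omega> = 1" unfolding iR_def KR_def using col_chain[OF h(2) Ycov] by simp
    moreover have "iB \<omega> = 1" unfolding iB_def KB_def using row_chain[OF h(3) Xcov] by simp
    moreover have "iT \<omega> = 1" unfolding iT_def KT_def using row_chain[OF h(4) Xcov] by simp
    ultimately show ?thesis by (simp add: indicator_def)
  next
    case False then show ?thesis by (simp add: indicator_def)
  qed
  interpret PP: product_prob_space "site_law p" "UNIV :: (int \<times> int) set" by (rule pps)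
  interpret PS: prob_space "P p" unfolding P_def by (rule prob_PiM_site)
  have setEq: "{\<sigma> \<in> space (P p). D_event x1 x2 y1 y2 X1 X2 Y1 Y2 \<sigma>}
     = prod_emb UNIV (site_law p) J0 {\<omega> \<in> space (PiM J0 (site_law p)). D_event x1 x2 y1 y2 X1 X2 Y1 Y2 \<omega>}"
  proof -
    have "D_event x1 x2 y1 y2 X1 X2 Y1 Y2 (restrict \<sigma> J0) = D_event x1 x2 y1 y2 X1 X2 Y1 Y2 \<sigma>" for \<sigma>
      by (rule Ddep) simp
    then show ?thesis unfolding P_def prod_emb_def by (auto simp: space_PiM_site)
  qed
  have "emeasure (P p) {\<sigma> \<in> space (P p). D_event x1 x2 y1 y2 X1 X2 Y1 Y2 \<sigma>}
      = emeasure (PiM J0 (site_law p)) {\<omega> \<in> space (PiM J0 (site_law p)). D_event x1 x2 y1 y2 X1 X2 Y1 Y2 \<omega>}"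
    unfolding setEq unfolding P_def
    by (rule PP.emeasure_PiM_emb') (auto intro: finJ sets_PiM_site_all)
  also have "\<dots> = (\<integral>\<^sup>+\<omega>. indicator {\<omega> \<in> space (PiM J0 (site_law p)). D_event x1 x2 y1 y2 X1 X2 Y1 Y2 \<omega>} \<omega> \<partial>PiM J0 (site_law p))"
    by (rule nn_integral_indicator[symmetric]) (auto intro: finJ sets_PiM_site_all)
  also have "\<dots> \<le> (\<integral>\<^sup>+\<sigma>. ennreal (iL \<sigma> * (iR \<sigma> * iB \<sigma> * iT \<sigma>)) \<partial>PiM J0 (site_law p))"
    by (rule nn_integral_mono) (rule Dind)
  also have "\<dots> \<le> (\<integral>\<^sup>+w. ennreal (eL w * (iR w * iB w * iT w)) \<partial>PiM J1 (site_law p))" by (rule st1)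
  also have "\<dots> = (\<integral>\<^sup>+\<sigma>. ennreal (iR \<sigma> * (eL \<sigma> * iB \<sigma> * iT \<sigma>)) \<partial>PiM J1 (site_law p))"
    by (rule nn_integral_cong) (simp add: ac_simps)
  also have "\<dots> \<le> (\<integral>\<^sup>+w. ennreal (eR w * (eL w * iB w * iT w)) \<partial>PiM J2 (site_law p))" by (rule st2)
  also have "\<dots> = (\<integral>\<^sup>+\<sigma>. ennreal (iB \<sigma> * (eR \<sigma> * eL \<sigma> * iT \<sigma>)) \<partial>PiM J2 (site_law p))"
    by (rule nn_integral_cong) (simp add: ac_simps)
  also have "\<dots> \<le> (\<integral>\<^sup>+w. ennreal (eB w * (eR w * eL w * iT w)) \<partial>PiM J3 (site_law p))" by (rule st3)
  also have "\<dots> = (\<integral>\<^sup>+\<sigma>. ennreal (iT \<sigma> * (eB \<sigma> * eR \<sigma> * eL \<sigma>)) \<partial>PiM J3 (site_law p))"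
    by (rule nn_integral_cong) (simp add: ac_simps)
  also have "\<dots> \<le> (\<integral>\<^sup>+w. ennreal (eT w * (eB w * eR w * eL w)) \<partial>PiM Cor (site_law p))" by (rule st4)
  also have "\<dots> \<le> ennreal (exp (- real_of_int s * gb - real_of_int t * ga + 2 * (gb + ga)
           + real_of_int s * real_of_int t * q * cc))" by (rule fb)
  finally have fin_em: "emeasure (P p) {\<sigma> \<in> space (P p). D_event x1 x2 y1 y2 X1 X2 Y1 Y2 \<sigma>}
     \<le> ennreal (exp (- real_of_int s * gb - real_of_int t * ga + 2 * (gb + ga)
           + real_of_int s * real_of_int t * q * cc))" .
  then show ?thesis unfolding gb_def ga_def cc_def
    by (simp add: PS.emeasure_eq_measure)
qed

end
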